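(* Let $a\ge b\ge k$ be positive integers. Then $\operatorname{Im}(\gamma_k)\subseteq\operatorname{Im}(\theta_1)$, where $\theta_1:\Lambda^{a+1}\otimes\Lambda^{b-1}\to\Lambda^a\otimes\Lambda^b$.
   Context: $K$ is a field of characteristic zero, $G=GL(n,K)$, $V=K^n$, $\Lambda=\bigoplus_i\Lambda^i$ the exterior algebra of $V$. $m$ is multiplication (also written by juxtaposition) and $\Delta_{s,t}:\Lambda^{s+t}\to\Lambda^s\otimes\Lambda^t$ the comultiplication component $v_1\cdots v_{s+t}\mapsto\sum_\sigma\mathrm{sgn}(\sigma)v_{\sigma(1)}\cdots v_{\sigma(s)}\otimes v_{\sigma(s+1)}\cdots v_{\sigma(s+t)}$ (permutations increasing on the first $s$ and last $t$ positions). $\theta_1=(1\otimes m)\circ(\Delta_{a,1}\otimes1):\Lambda^{a+1}\otimes\Lambda^{b-1}\to\Lambda^a\otimes\Lambda^b$. $\beta_k:\Lambda^a\otimes\Lambda^k\otimes\Lambda^{b-k}\to\Lambda^a\otimes\Lambda^b$ is $(m\otimes m)\circ(1\otimes\tau\otimes1)\circ(\Delta_{a-k,k}\otimes1)$ with $\tau(w\otimes z)=z\otimes w$ on $\Lambda^k\otimes\Lambda^k$, and $\gamma_k(x\otimes y\otimes z)=x\otimes yz-\beta_k(x\otimes y\otimes z)$. *)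

theory Defs
  imports Main
begin

text \<open>V = K^n with basis e_0,...,e_(n-1). The exterior power
Lambda^d has basis e_S (S a d-subset of {0..<n}, e_S = product of e_i, i in S,
in increasing order). Elements of Lambda^a (x) Lambda^b are coefficient functions
on pairs (S,T) of basis index sets; similarly for triple tensors.\<close>

definition ext_basis :: "nat \<Rightarrow> nat \<Rightarrow> nat set set" where
  "ext_basis n d = {S. S \<subseteq> {0..<n} \<and> card S = d}"

definition tensor2 :: "nat \<Rightarrow> nat \<Rightarrow> nat \<Rightarrow> (nat set \<times> nat set \<Rightarrow> 'k::field) set" where
  "tensor2 n a b = {x. \<forall>P Q. x (P, Q) \<noteq> 0 \<longrightarrow> P \<in> ext_basis n a \<and> Q \<in> ext_basis n b}"

definition tensor3 :: "nat \<Rightarrow> nat \<Rightarrow> nat \<Rightarrow> nat \<Rightarrow> (nat set \<times> nat set \<times> nat set \<Rightarrow> 'k::field) set" where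
  "tensor3 n a b c = {x. \<forall>P Q R. x (P, Q, R) \<noteq> 0 \<longrightarrow>
      P \<in> ext_basis n a \<and> Q \<in> ext_basis n b \<and> R \<in> ext_basis n c}"

text \<open>Sign of the shuffle putting the (sorted) indices of A before those of B.\<close>
definition wsign :: "nat set \<Rightarrow> nat set \<Rightarrow> 'k::field" where
  "wsign A B = (-1) ^ card {(x, y). x \<in> A \<and> y \<in> B \<and> y < x}"

text \<open>Product e_S e_T in Lambda, as coefficient function.\<close>
definition wedge_b :: "nat set \<Rightarrow> nat set \<Rightarrow> nat set \<Rightarrow> 'k::field" where
  "wedge_b S T R = (if S \<inter> T = {} \<and> R = S \<union> T then wsign S T else 0)"

text \<open>Comultiplication component Delta_(s,t)(e_S) as coefficient function.\<close>
definition comult_b :: "nat \<Rightarrow> nat \<Rightarrow> nat set \<Rightarrow> nat set \<times> nat set \<Rightarrow> 'k::field" where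
  "comult_b s t S = (\<lambda>(A, B). if A \<subseteq> S \<and> card A = s \<and> B = S - A \<and> card B = t
      then wsign A B else 0)"

text \<open>theta_1 = (1 (x) m) o (Delta_(a,1) (x) 1) on the basis tensor e_S (x) e_T.\<close>
definition theta1_b :: "nat \<Rightarrow> nat set \<Rightarrow> nat set \<Rightarrow> nat set \<times> nat set \<Rightarrow> 'k::field" where
  "theta1_b a S T = (\<lambda>(P, Q). \<Sum>B\<in>Pow S. comult_b a 1 S (P, B) * wedge_b B T Q)"

definition theta1 :: "nat \<Rightarrow> nat \<Rightarrow> nat \<Rightarrow> (nat set \<times> nat set \<Rightarrow> 'k::field)
    \<Rightarrow> (nat set \<times> nat set \<Rightarrow> 'k)" where
  "theta1 n a b x = (\<lambda>PQ. \<Sum>S\<in>ext_basis n (a + 1). \<Sum>T\<in>ext_basis n (b - 1).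
      x (S, T) * theta1_b a S T PQ)"

text \<open>beta_k = (m (x) m) o (1 (x) tau (x) 1) o (Delta_(a-k,k) (x) 1) on e_S (x) e_Y (x) e_Z.\<close>
definition beta_b :: "nat \<Rightarrow> nat \<Rightarrow> nat set \<Rightarrow> nat set \<Rightarrow> nat set \<Rightarrow> nat set \<times> nat set \<Rightarrow> 'k::field" where
  "beta_b a k S Y Z = (\<lambda>(P, Q). \<Sum>A\<in>Pow S. \<Sum>B\<in>Pow S.
      comult_b (a - k) k S (A, B) * wedge_b A Y P * wedge_b B Z Q)"

text \<open>gamma_k(x (x) y (x) z) = x (x) yz - beta_k(x (x) y (x) z) on basis tensors.\<close>
definition gamma_b :: "nat \<Rightarrow> nat \<Rightarrow> nat set \<Rightarrow> nat set \<Rightarrow> nat set \<Rightarrow> nat set \<times> nat set \<Rightarrow> 'k::field" where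
  "gamma_b a k S Y Z = (\<lambda>(P, Q). (if P = S then wedge_b Y Z Q else 0) - beta_b a k S Y Z (P, Q))"

definition gamma :: "nat \<Rightarrow> nat \<Rightarrow> nat \<Rightarrow> nat \<Rightarrow> (nat set \<times> nat set \<times> nat set \<Rightarrow> 'k::field)
    \<Rightarrow> (nat set \<times> nat set \<Rightarrow> 'k)" where
  "gamma n a b k x = (\<lambda>PQ. \<Sum>S\<in>ext_basis n a. \<Sum>Y\<in>ext_basis n k. \<Sum>Z\<in>ext_basis n (b - k).
      x (S, Y, Z) * gamma_b a k S Y Z PQ)"

end

theory Submission
  imports Defs
begin



definition ninv :: "nat set \<Rightarrow> nat set \<Rightarrow> nat" where
  "ninv A B = card {(x, y). x \<in> A \<and> y \<in> B \<and> y < x}"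

lemma wsign_ninv: "wsign A B = (-1) ^ ninv A B"
  by (simp add: wsign_def ninv_def)

lemma ninv_fin: "finite A \<Longrightarrow> finite B \<Longrightarrow> finite {(x, y). x \<in> A \<and> y \<in> B \<and> y < x}"
  by (rule finite_subset[of _ "A \<times> B"]) auto

lemma ninv_Un_left:
  assumes "finite A" "finite B" "finite C" "A \<inter> B = {}"
  shows "ninv (A \<union> B) C = ninv A C + ninv B C"
proof -
  have "{(x, y). x \<in> A \<union> B \<and> y \<in> C \<and> y < x} =
        {(x, y). x \<in> A \<and> y \<in> C \<and> y < x} \<union> {(x, y). x \<in> B \<and> y \<in> C \<and> y < x}" by auto
  moreover have "{(x, y). x \<in> A \<and> y \<in> C \<and> y < x} \<inter> {(x, y). x \<in> B \<and> y \<in> C \<and> y < x} = {}"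
    using assms(4) by auto
  ultimately show ?thesis unfolding ninv_def
    by (simp add: card_Un_disjoint ninv_fin assms)
qed

lemma ninv_Un_right:
  assumes "finite A" "finite B" "finite C" "B \<inter> C = {}"
  shows "ninv A (B \<union> C) = ninv A B + ninv A C"
proof -
  have "{(x, y). x \<in> A \<and> y \<in> B \<union> C \<and> y < x} =
        {(x, y). x \<in> A \<and> y \<in> B \<and> y < x} \<union> {(x, y). x \<in> A \<and> y \<in> C \<and> y < x}" by auto
  moreover have "{(x, y). x \<in> A \<and> y \<in> B \<and> y < x} \<inter> {(x, y). x \<in> A \<and> y \<in> C \<and> y < x} = {}"
    using assms(4) by auto
  ultimately show ?thesis unfolding ninv_def
    by (simp add: card_Un_disjoint ninv_fin assms)
qed

lemma ninv_swap:
  assumes "finite A" "finite B" "A \<inter> B = {}"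
  shows "ninv A B + ninv B A = card A * card B"
proof -
  let ?X = "{(x, y). x \<in> A \<and> y \<in> B \<and> y < x}"
  let ?Y = "{(x, y). x \<in> A \<and> y \<in> B \<and> x < y}"
  have e1: "A \<times> B = ?X \<union> ?Y" using assms(3) by (auto simp: linorder_neq_iff)
  moreover have e2: "?X \<inter> ?Y = {}" by auto
  ultimately have "card (A \<times> B) = card ?X + card ?Y"
  proof -
    have f: "finite ?Y" by (rule finite_subset[of _ "A \<times> B"]) (auto simp: assms)
    show ?thesis using e1 e2 by (simp add: card_Un_disjoint[OF ninv_fin[OF assms(1,2)] f])
  qed
  hence "card A * card B = card ?X + card ?Y" by (simp add: card_cartesian_product)
  moreover have "card ?Y = ninv B A" unfolding ninv_def
    by (rule bij_betw_same_card[of "\<lambda>(x, y). (y, x)"]) (auto simp: bij_betw_def inj_on_def image_iff)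
  ultimately show ?thesis by (simp add: ninv_def)
qed

lemma ninv_empty[simp]: "ninv {} B = 0" "ninv A {} = 0"
  by (simp_all add: ninv_def)

lemma neg1_pow_eq: "((-1::'k::field_char_0) ^ m = (-1) ^ n) \<longleftrightarrow> (even m \<longleftrightarrow> even n)"
  by (cases "even m"; cases "even n") auto

lemma ninv_insert_left:
  "finite R \<Longrightarrow> finite C \<Longrightarrow> u \<notin> R \<Longrightarrow> ninv (insert u R) C = ninv {u} C + ninv R C"
  using ninv_Un_left[of "{u}" R C] by simp

lemma ninv_insert_right:
  "finite A \<Longrightarrow> finite B \<Longrightarrow> u \<notin> B \<Longrightarrow> ninv A (insert u B) = ninv A {u} + ninv A B"
  using ninv_Un_right[of A "{u}" B] by simp

definition cfe :: "nat set \<Rightarrow> nat set \<Rightarrow> nat set \<Rightarrow> nat set \<Rightarrow> nat set \<Rightarrow> nat" where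
  "cfe S Y Z A C = ninv (S - A) A + ninv C (Y - C) + ninv (S - A) C + ninv A (Y - C)
     + ninv A Z + ninv (Y - C) Z"

definition Dc :: "nat set \<Rightarrow> nat set \<Rightarrow> nat set \<Rightarrow> nat set \<Rightarrow> nat set \<Rightarrow> bool" where
  "Dc S Y Z A C \<longleftrightarrow> (S - A) \<inter> C = {} \<and> A \<inter> (Y - C) = {} \<and> A \<inter> Z = {} \<and> (Y - C) \<inter> Z = {}"

lemma SL1_par:
  assumes fin: "finite S" "finite Y" "finite Z" and sub: "A \<subseteq> S" "C \<subseteq> Y"
    and u: "u \<in> S" "u \<notin> A" "u \<notin> C" "u \<notin> Y" "u \<notin> Z" and D: "Dc S Y Z A C"
  shows "even (cfe S Y Z A C + ninv ((S - A) \<union> C - {u}) {u} + ninv {u} (A \<union> (Y - C) \<union> Z))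
     = even (card C + cfe S Y Z (insert u A) C)"
proof -
  define R where "R = S - insert u A"
  define E where "E = Y - C"
  have fA: "finite A" "finite C" using fin sub finite_subset by auto
  have fR: "finite R" "finite E" using fin by (auto simp: R_def E_def)
  have uR: "u \<notin> R" "u \<notin> E" using u by (auto simp: R_def E_def)
  have e1: "S - A = insert u R" using u sub by (auto simp: R_def)
  have e2: "(S - A) \<union> C - {u} = R \<union> C" using u by (auto simp: R_def)
  have e3: "A \<union> (Y - C) \<union> Z = A \<union> E \<union> Z" by (simp add: E_def)
  have dRC: "R \<inter> C = {}" using D by (auto simp: Dc_def R_def)
  have dAE: "A \<inter> E = {}" "(A \<union> E) \<inter> Z = {}" using D by (auto simp: Dc_def E_def)
  have h1: "ninv (S - A) A = ninv {u} A + ninv R A"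
    unfolding e1 by (rule ninv_insert_left[OF fR(1) fA(1) uR(1)])
  have h2: "ninv (S - A) C = ninv {u} C + ninv R C"
    unfolding e1 by (rule ninv_insert_left[OF fR(1) fA(2) uR(1)])
  have h3: "ninv ((S - A) \<union> C - {u}) {u} = ninv R {u} + ninv C {u}"
    unfolding e2 by (rule ninv_Un_left[OF fR(1) fA(2) _ dRC]) simp
  have h4: "ninv {u} (A \<union> E \<union> Z) = ninv {u} A + ninv {u} E + ninv {u} Z"
    using ninv_Un_right[OF _ _ _ dAE(2), of "{u}"] ninv_Un_right[OF _ _ _ dAE(1), of "{u}"] fA fR fin
    by simp
  have h5: "ninv R (insert u A) = ninv R {u} + ninv R A"
    by (rule ninv_insert_right[OF fR(1) fA(1) u(2)])
  have h6: "ninv (insert u A) E = ninv {u} E + ninv A E" by (rule ninv_insert_left[OF fA(1) fR(2) u(2)])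
  have h7: "ninv (insert u A) Z = ninv {u} Z + ninv A Z" by (rule ninv_insert_left[OF fA(1) fin(3) u(2)])
  have sw: "ninv {u} C + ninv C {u} = card C" using ninv_swap[of "{u}" C] fA u by simp
  have "cfe S Y Z A C + ninv ((S - A) \<union> C - {u}) {u} + ninv {u} (A \<union> (Y - C) \<union> Z)
     = card C + cfe S Y Z (insert u A) C + 2 * ninv {u} A"
    unfolding cfe_def E_def[symmetric] R_def[symmetric] h1 h2 h3 h4 h5 h6 h7 sw[symmetric] by simp
  then show ?thesis by simp
qed

lemma SL2_par:
  assumes fin: "finite S" "finite Y" "finite Z" and sub: "A \<subseteq> S" "C \<subseteq> Y"
    and u: "u \<in> C" "u \<notin> A" "u \<notin> S" "u \<notin> Z" and D: "Dc S Y Z A C"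
  shows "even (cfe S Y Z A C + ninv ((S - A) \<union> C - {u}) {u} + ninv {u} (A \<union> (Y - C) \<union> Z))
     = even (card A + cfe S Y Z A (C - {u}))"
proof -
  define R where "R = S - A"
  define E where "E = Y - C"
  define C' where "C' = C - {u}"
  have fA: "finite A" "finite C" "finite C'" using fin sub finite_subset by (auto simp: C'_def)
  have fR: "finite R" "finite E" using fin by (auto simp: R_def E_def)
  have uR: "u \<notin> R" "u \<notin> E" "u \<notin> C'" using u by (auto simp: R_def E_def C'_def)
  have eY: "Y - C' = insert u E" using u sub by (auto simp: E_def C'_def)
  have eC: "C = insert u C'" using u by (auto simp: C'_def)
  have e2: "R \<union> C - {u} = R \<union> C'" using u by (auto simp: R_def C'_def)
  have dRC: "R \<inter> C' = {}" using D by (auto simp: Dc_def R_def C'_def)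
  have dAE: "A \<inter> E = {}" "(A \<union> E) \<inter> Z = {}" using D by (auto simp: Dc_def E_def)
  have h1: "ninv C E = ninv {u} E + ninv C' E"
    by (subst eC, rule ninv_insert_left[OF fA(3) fR(2) uR(3)])
  have h2: "ninv R C = ninv R {u} + ninv R C'"
    by (subst eC, rule ninv_insert_right[OF fR(1) fA(3) uR(3)])
  have h3: "ninv (R \<union> C - {u}) {u} = ninv R {u} + ninv C' {u}"
    unfolding e2 by (rule ninv_Un_left[OF fR(1) fA(3) _ dRC]) simp
  have h4: "ninv {u} (A \<union> E \<union> Z) = ninv {u} A + ninv {u} E + ninv {u} Z"
    using ninv_Un_right[OF _ _ _ dAE(2), of "{u}"] ninv_Un_right[OF _ _ _ dAE(1), of "{u}"] fA fR fin
    by simp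
  have h5: "ninv C' (Y - C') = ninv C' {u} + ninv C' E"
    unfolding eY by (rule ninv_insert_right[OF fA(3) fR(2) uR(2)])
  have h6: "ninv A (Y - C') = ninv A {u} + ninv A E"
    unfolding eY by (rule ninv_insert_right[OF fA(1) fR(2) uR(2)])
  have h7: "ninv (Y - C') Z = ninv {u} Z + ninv E Z"
    unfolding eY by (rule ninv_insert_left[OF fR(2) fin(3) uR(2)])
  have sw: "ninv {u} A + ninv A {u} = card A" using ninv_swap[of "{u}" A] fA u by simp
  have "cfe S Y Z A C + ninv ((S - A) \<union> C - {u}) {u} + ninv {u} (A \<union> (Y - C) \<union> Z) + 2 * ninv A {u}
     = card A + cfe S Y Z A (C - {u}) + 2 * ninv {u} E + 2 * ninv R {u}"
    unfolding cfe_def E_def[symmetric] R_def[symmetric] C'_def[symmetric] h1 h2 h3 h4 h5 h6 h7 sw[symmetric]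
    by simp
  then show ?thesis by presburger
qed

lemma SL3_par:
  assumes fin: "finite S" "finite Y" "finite Z" and sub: "A \<subseteq> S" "C \<subseteq> Y"
    and u: "u \<in> S" "u \<in> Y" "u \<notin> A" "u \<notin> C" "u \<notin> Z" and cAC: "card A = card C"
  shows "even (cfe S Y Z (insert u A) (insert u C)) = even (cfe S Y Z A C)"
proof -
  define R where "R = S - insert u A"
  define E where "E = Y - insert u C"
  have fA: "finite A" "finite C" using fin sub finite_subset by auto
  have fR: "finite R" "finite E" using fin by (auto simp: R_def E_def)
  have uR: "u \<notin> R" "u \<notin> E" using u by (auto simp: R_def E_def)
  have eS: "S - A = insert u R" using u sub by (auto simp: R_def)
  have eY: "Y - C = insert u E" using u sub by (auto simp: E_def)
  have h1: "ninv R (insert u A) = ninv R {u} + ninv R A" by (rule ninv_insert_right[OF fR(1) fA(1) u(3)])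
  have h2: "ninv (insert u C) E = ninv {u} E + ninv C E" by (rule ninv_insert_left[OF fA(2) fR(2) u(4)])
  have h3: "ninv R (insert u C) = ninv R {u} + ninv R C" by (rule ninv_insert_right[OF fR(1) fA(2) u(4)])
  have h4: "ninv (insert u A) E = ninv {u} E + ninv A E" by (rule ninv_insert_left[OF fA(1) fR(2) u(3)])
  have h5: "ninv (insert u A) Z = ninv {u} Z + ninv A Z" by (rule ninv_insert_left[OF fA(1) fin(3) u(3)])
  have g1: "ninv (S - A) A = ninv {u} A + ninv R A" unfolding eS by (rule ninv_insert_left[OF fR(1) fA(1) uR(1)])
  have g2: "ninv C (Y - C) = ninv C {u} + ninv C E" unfolding eY by (rule ninv_insert_right[OF fA(2) fR(2) uR(2)])
  have g3: "ninv (S - A) C = ninv {u} C + ninv R C" unfolding eS by (rule ninv_insert_left[OF fR(1) fA(2) uR(1)])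
  have g4: "ninv A (Y - C) = ninv A {u} + ninv A E" unfolding eY by (rule ninv_insert_right[OF fA(1) fR(2) uR(2)])
  have g5: "ninv (Y - C) Z = ninv {u} Z + ninv E Z" unfolding eY by (rule ninv_insert_left[OF fR(2) fin(3) uR(2)])
  have sw1: "ninv {u} A + ninv A {u} = card A" using ninv_swap[of "{u}" A] fA u by simp
  have sw2: "ninv {u} C + ninv C {u} = card C" using ninv_swap[of "{u}" C] fA u by simp
  have "cfe S Y Z (insert u A) (insert u C) + card A + card C = cfe S Y Z A C + 2 * ninv R {u} + 2 * ninv {u} E"
    unfolding cfe_def E_def[symmetric] R_def[symmetric] h1 h2 h3 h4 h5 g1 g2 g3 g4 g5 sw1[symmetric] sw2[symmetric]
    by simp
  then show ?thesis using cAC by presburger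
qed




definition lc :: "'i set \<Rightarrow> ('i \<Rightarrow> 'k::field) \<Rightarrow> ('i \<Rightarrow> 'p) \<Rightarrow> 'p \<Rightarrow> 'k" where
  "lc I c f p = (\<Sum>i\<in>I. if f i = p then c i else 0)"

lemma lc_reindex:
  assumes "bij_betw h I J" "\<And>i. i \<in> I \<Longrightarrow> c i = c' (h i)" "\<And>i. i \<in> I \<Longrightarrow> f i = f' (h i)"
  shows "lc I c f = lc J c' f'"
proof
  fix p
  have "lc J c' f' p = (\<Sum>i\<in>I. if f' (h i) = p then c' (h i) else 0)"
    unfolding lc_def using sum.reindex_bij_betw[OF assms(1), of "\<lambda>j. if f' j = p then c' j else 0"] by simp
  also have "\<dots> = lc I c f p" unfolding lc_def by (rule sum.cong) (auto simp: assms)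
  finally show "lc I c f p = lc J c' f' p" by simp
qed

lemma lc_split:
  assumes "finite I"
  shows "lc I c f p = lc {i\<in>I. P i} c f p + lc {i\<in>I. \<not> P i} c f p"
proof -
  have "I = {i\<in>I. P i} \<union> {i\<in>I. \<not> P i}" by auto
  then show ?thesis unfolding lc_def
    by (metis (no_types, lifting) assms sum.union_inter_neutral finite_Un
        Int_emptyI mem_Collect_eq sum.union_disjoint)
qed

lemma lc_scale: "r * lc I c f p = lc I (\<lambda>i. r * c i) f p"
  unfolding lc_def by (simp add: sum_distrib_left if_distrib cong: if_cong)

lemma lc_Sigma:
  assumes "finite I" "\<And>i. i \<in> I \<Longrightarrow> finite (B i)"
  shows "lc (Sigma I B) c f p = (\<Sum>i\<in>I. lc (B i) (\<lambda>u. c (i, u)) (\<lambda>u. f (i, u)) p)"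
proof -
  have "\<forall>i\<in>I. finite (B i)" using assms(2) by blast
  then show ?thesis
    unfolding lc_def using sum.Sigma[OF assms(1), of B "\<lambda>i u. if f (i, u) = p then c (i, u) else 0"]
    by (simp add: case_prod_eta)
qed

lemma lc_const_fiber:
  assumes "finite I" "\<And>i. i \<in> I \<Longrightarrow> finite (B i)"
  shows "lc (Sigma I B) (\<lambda>x. c (fst x)) (\<lambda>x. f (fst x)) p = lc I (\<lambda>i. of_nat (card (B i)) * c i) f p"
proof -
  have "lc (Sigma I B) (\<lambda>x. c (fst x)) (\<lambda>x. f (fst x)) p = (\<Sum>i\<in>I. lc (B i) (\<lambda>u. c i) (\<lambda>u. f i) p)"
    using lc_Sigma[OF assms, where c="\<lambda>x. c (fst x)" and f="\<lambda>x. f (fst x)" and p=p] by simp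
  also have "\<dots> = lc I (\<lambda>i. of_nat (card (B i)) * c i) f p"
    unfolding lc_def by (rule sum.cong) auto
  finally show ?thesis .
qed

lemma if_mult_zero: "(if P then x else 0) * (y::'k::field) = (if P then x * y else 0)" by simp

lemma ext_basis_finite: "finite (ext_basis n d)"
  unfolding ext_basis_def by (rule finite_subset[of _ "Pow {0..<n}"]) auto

lemma theta1_lc:
  assumes "finite I" "\<And>i. i \<in> I \<Longrightarrow> f i \<in> ext_basis n (a + 1) \<times> ext_basis n (b - 1)"
  shows "theta1 n a b (lc I c f) PQ = (\<Sum>i\<in>I. c i * theta1_b a (fst (f i)) (snd (f i)) PQ)"
proof -
  have "theta1 n a b (lc I c f) PQ =
     (\<Sum>ST\<in>ext_basis n (a + 1) \<times> ext_basis n (b - 1). lc I c f ST * theta1_b a (fst ST) (snd ST) PQ)"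
    unfolding theta1_def sum.cartesian_product by (simp add: case_prod_beta)
  also have "\<dots> = (\<Sum>ST\<in>ext_basis n (a + 1) \<times> ext_basis n (b - 1). \<Sum>i\<in>I.
       if f i = ST then c i * theta1_b a (fst ST) (snd ST) PQ else 0)"
    unfolding lc_def by (simp add: sum_distrib_right if_mult_zero)
  also have "\<dots> = (\<Sum>i\<in>I. \<Sum>ST\<in>ext_basis n (a + 1) \<times> ext_basis n (b - 1).
       if f i = ST then c i * theta1_b a (fst ST) (snd ST) PQ else 0)"
    by (rule sum.swap)
  also have "\<dots> = (\<Sum>i\<in>I. c i * theta1_b a (fst (f i)) (snd (f i)) PQ)"
    using assms(2) by (intro sum.cong) (auto simp: sum.delta ext_basis_finite)
  finally show ?thesis .
qed

lemma theta1_b_eq: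
  assumes "finite U" "card U = a + 1"
  shows "theta1_b a U T PQ = lc {u\<in>U. u \<notin> T} (\<lambda>u. wsign (U - {u}) {u} * wsign {u} T)
            (\<lambda>u. (U - {u}, insert u T)) PQ"
proof -
  obtain P Q where PQ: "PQ = (P, Q)" by fastforce
  let ?g = "\<lambda>B. comult_b a 1 U (P, B) * wedge_b B T Q"
  have "theta1_b a U T PQ = sum ?g (Pow U)" by (simp add: theta1_b_def PQ)
  also have "\<dots> = sum ?g ((\<lambda>u. {u}) ` U)"
    by (rule sum.mono_neutral_right) (auto simp: assms comult_b_def card_1_singleton_iff)
  also have "\<dots> = (\<Sum>u\<in>U. ?g {u})" by (subst sum.reindex) (auto simp: inj_on_def)
  also have "\<dots> = (\<Sum>u\<in>U. if u \<notin> T \<and> (U - {u}, insert u T) = (P, Q) then wsign (U - {u}) {u} * wsign {u} T else 0)"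
  proof (rule sum.cong)
    fix u assume u: "u \<in> U"
    have c: "card (U - {u}) = a" using assms u by simp
    have "(P \<subseteq> U \<and> {u} = U - P) \<longleftrightarrow> P = U - {u}" using u by blast
    then show "?g {u} = (if u \<notin> T \<and> (U - {u}, insert u T) = (P, Q) then wsign (U - {u}) {u} * wsign {u} T else 0)"
      using c by (auto simp: comult_b_def wedge_b_def)
  qed simp
  also have "\<dots> = lc {u\<in>U. u \<notin> T} (\<lambda>u. wsign (U - {u}) {u} * wsign {u} T) (\<lambda>u. (U - {u}, insert u T)) PQ"
    unfolding lc_def PQ by (rule sum.mono_neutral_cong_right) (auto simp: assms)
  finally show ?thesis .
qed




definition IX :: "nat set \<Rightarrow> nat set \<Rightarrow> nat set \<Rightarrow> nat \<Rightarrow> nat \<Rightarrow> (nat set \<times> nat set) set" where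
  "IX S Y Z i j = {(A, C). A \<subseteq> S \<and> card A = i \<and> C \<subseteq> Y \<and> card C = j \<and> Dc S Y Z A C}"

definition cf :: "nat set \<Rightarrow> nat set \<Rightarrow> nat set \<Rightarrow> nat set \<times> nat set \<Rightarrow> 'k::field" where
  "cf S Y Z x = (-1) ^ cfe S Y Z (fst x) (snd x)"

definition pos :: "nat set \<Rightarrow> nat set \<Rightarrow> nat set \<Rightarrow> nat set \<times> nat set \<Rightarrow> nat set \<times> nat set" where
  "pos S Y Z x = ((S - fst x) \<union> snd x, fst x \<union> (Y - snd x) \<union> Z)"

definition WW :: "nat set \<Rightarrow> nat set \<Rightarrow> nat set \<Rightarrow> nat \<Rightarrow> nat \<Rightarrow> nat set \<times> nat set \<Rightarrow> 'k::field" where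
  "WW S Y Z i j = lc (IX S Y Z i j) (cf S Y Z) (pos S Y Z)"

lemma IX_finite: "finite S \<Longrightarrow> finite Y \<Longrightarrow> finite (IX S Y Z i j)"
  unfolding IX_def by (rule finite_subset[of _ "Pow S \<times> Pow Y"]) auto

lemma lc_cong: "I = J \<Longrightarrow> (\<And>i. i \<in> J \<Longrightarrow> c i = c' i) \<Longrightarrow> (\<And>i. i \<in> J \<Longrightarrow> f i = f' i) \<Longrightarrow> lc I c f = lc J c' f'"
  unfolding lc_def by (intro ext sum.cong) auto

lemma pow_eqI: "even m = even n \<Longrightarrow> ((-1::'k::field_char_0) ^ m = (-1) ^ n)"
  using neg1_pow_eq by blast

context
  fixes S Y Z :: "nat set" and n a b k j :: nat
  assumes fin: "finite S" "finite Y" "finite Z"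
    and sub: "S \<subseteq> {0..<n}" "Y \<subseteq> {0..<n}" "Z \<subseteq> {0..<n}"
    and cards: "card S = a" "card Y = k" "card Z = b - k" "k \<le> b"
    and jj: "1 \<le> j" "j \<le> k"
begin

lemma finS: "A \<subseteq> S \<Longrightarrow> finite A" using fin finite_subset by blast
lemma finY: "A \<subseteq> Y \<Longrightarrow> finite A" using fin finite_subset by blast

lemma pos_mem:
  assumes "x \<in> IX S Y Z (j - 1) j"
  shows "pos S Y Z x \<in> ext_basis n (a + 1) \<times> ext_basis n (b - 1)"
proof -
  obtain A C where x: "x = (A, C)" by fastforce
  have A: "A \<subseteq> S" "card A = j - 1" "C \<subseteq> Y" "card C = j" "Dc S Y Z A C" using assms by (auto simp: x IX_def)
  have fA: "finite A" "finite C" using A finS finY by auto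
  have "card A \<le> a" using A cards fin card_mono by metis
  have c1: "card ((S - A) \<union> C) = a + 1"
    using A fA fin cards \<open>card A \<le> a\<close> jj
    by (subst card_Un_disjoint) (auto simp: Dc_def card_Diff_subset)
  have "card (Y - C) = k - j" using A fA cards by (simp add: card_Diff_subset)
  then have c2: "card (A \<union> (Y - C) \<union> Z) = b - 1"
    using A fA fin cards jj
    by (subst card_Un_disjoint; (subst card_Un_disjoint)?) (auto simp: Dc_def)
  show ?thesis using c1 c2 A sub by (auto simp: pos_def x ext_basis_def)
qed


definition "KK = Sigma (IX S Y Z (j - 1) j) (\<lambda>x. {u \<in> fst (pos S Y Z x). u \<notin> snd (pos S Y Z x)})"
definition "cK y = (cf S Y Z (fst y) :: 'k::field) * (wsign (fst (pos S Y Z (fst y)) - {snd y}) {snd y}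
      * wsign {snd y} (snd (pos S Y Z (fst y))))"
definition "fK y = (fst (pos S Y Z (fst y)) - {snd y}, insert (snd y) (snd (pos S Y Z (fst y))))"

lemma theta_Psi_K:
  "theta1 n a b (WW S Y Z (j - 1) j :: _ \<Rightarrow> 'k::field) p = lc KK cK fK p"
proof -
  let ?I = "IX S Y Z (j - 1) j"
  have fI: "finite ?I" by (rule IX_finite[OF fin(1,2)])
  have "theta1 n a b (WW S Y Z (j - 1) j :: _ \<Rightarrow> 'k) p
      = (\<Sum>x\<in>?I. cf S Y Z x * theta1_b a (fst (pos S Y Z x)) (snd (pos S Y Z x)) p)"
    unfolding WW_def by (rule theta1_lc[OF fI pos_mem])
  also have "\<dots> = (\<Sum>x\<in>?I. cf S Y Z x * lc {u \<in> fst (pos S Y Z x). u \<notin> snd (pos S Y Z x)}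
      (\<lambda>u. wsign (fst (pos S Y Z x) - {u}) {u} * wsign {u} (snd (pos S Y Z x)))
      (\<lambda>u. (fst (pos S Y Z x) - {u}, insert u (snd (pos S Y Z x)))) p)"
  proof (rule sum.cong[OF refl])
    fix x assume x: "x \<in> ?I"
    have "fst (pos S Y Z x) \<in> ext_basis n (a + 1)" using pos_mem[OF x] by auto
    then have "finite (fst (pos S Y Z x))" "card (fst (pos S Y Z x)) = a + 1"
      unfolding ext_basis_def using finite_subset by auto
    then show "cf S Y Z x * theta1_b a (fst (pos S Y Z x)) (snd (pos S Y Z x)) p = cf S Y Z x * lc {u \<in> fst (pos S Y Z x). u \<notin> snd (pos S Y Z x)}
      (\<lambda>u. wsign (fst (pos S Y Z x) - {u}) {u} * wsign {u} (snd (pos S Y Z x)))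
      (\<lambda>u. (fst (pos S Y Z x) - {u}, insert u (snd (pos S Y Z x)))) p"
      by (simp add: theta1_b_eq)
  qed
  also have "\<dots> = (\<Sum>x\<in>?I. lc {u \<in> fst (pos S Y Z x). u \<notin> snd (pos S Y Z x)} (\<lambda>u. cK (x, u)) (\<lambda>u. fK (x, u)) p)"
    unfolding lc_scale cK_def fK_def by (simp add: mult.assoc)
  also have "\<dots> = lc KK cK fK p"
    unfolding KK_def
  proof (rule lc_Sigma[symmetric])
    show "finite ?I" by (rule fI)
    fix x assume "x \<in> ?I"
    then have "snd x \<subseteq> Y" by (auto simp: IX_def)
    then have "finite (snd x)" using finite_subset fin(2) by blast
    then have "finite (fst (pos S Y Z x))" by (simp add: pos_def fin)
    then show "finite {u \<in> fst (pos S Y Z x). u \<notin> snd (pos S Y Z x)}" by simp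
  qed
  finally show ?thesis .
qed


definition "K1 = {y \<in> KK. snd y \<in> S}"
definition "K2 = {y \<in> KK. snd y \<notin> S}"
definition "Sg1 = Sigma (IX S Y Z j j) fst"
definition "Sg2 = Sigma (IX S Y Z (j - 1) (j - 1)) (\<lambda>x. Y - snd x)"
definition "J1 = {y \<in> Sg1. snd y \<notin> snd (fst y)}"
definition "J1' = {y \<in> Sg1. \<not> snd y \<notin> snd (fst y)}"
definition "J2 = {y \<in> Sg2. snd y \<notin> S}"
definition "J2' = {y \<in> Sg2. \<not> snd y \<notin> S}"

lemma mem_K1: "((A, C), u) \<in> K1 \<longleftrightarrow> (A, C) \<in> IX S Y Z (j - 1) j \<and> u \<in> S \<and> u \<notin> A \<and> u \<notin> C \<and> u \<notin> Y \<and> u \<notin> Z"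
  unfolding K1_def KK_def pos_def IX_def Dc_def by auto

lemma mem_K2: "((A, C), u) \<in> K2 \<longleftrightarrow> (A, C) \<in> IX S Y Z (j - 1) j \<and> u \<notin> S \<and> u \<in> C \<and> u \<notin> Z"
  unfolding K2_def KK_def pos_def IX_def Dc_def by auto

lemma mem_J1: "((A, C), u) \<in> J1 \<longleftrightarrow> (A, C) \<in> IX S Y Z j j \<and> u \<in> A \<and> u \<notin> C"
  unfolding J1_def Sg1_def by auto

lemma mem_J1': "((A, C), u) \<in> J1' \<longleftrightarrow> (A, C) \<in> IX S Y Z j j \<and> u \<in> A \<and> u \<in> C"
  unfolding J1'_def Sg1_def by auto

lemma mem_J2: "((A, C), u) \<in> J2 \<longleftrightarrow> (A, C) \<in> IX S Y Z (j - 1) (j - 1) \<and> u \<in> Y \<and> u \<notin> C \<and> u \<notin> S"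
  unfolding J2_def Sg2_def by auto

lemma mem_J2': "((A, C), u) \<in> J2' \<longleftrightarrow> (A, C) \<in> IX S Y Z (j - 1) (j - 1) \<and> u \<in> Y \<and> u \<notin> C \<and> u \<in> S"
  unfolding J2'_def Sg2_def by auto

lemma tr1: "(A, C) \<in> IX S Y Z (j - 1) j \<Longrightarrow> u \<in> S \<Longrightarrow> u \<notin> A \<Longrightarrow> u \<notin> C \<Longrightarrow> u \<notin> Y \<Longrightarrow> u \<notin> Z
   \<Longrightarrow> (insert u A, C) \<in> IX S Y Z j j"
  using jj finS[of A] unfolding IX_def Dc_def by auto

lemma tr1i: "(A, C) \<in> IX S Y Z j j \<Longrightarrow> u \<in> A \<Longrightarrow> u \<notin> C
   \<Longrightarrow> (A - {u}, C) \<in> IX S Y Z (j - 1) j \<and> u \<in> S \<and> u \<notin> Y \<and> u \<notin> Z"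
  using jj finS[of A] unfolding IX_def Dc_def by auto

lemma tr2: "(A, C) \<in> IX S Y Z (j - 1) j \<Longrightarrow> u \<notin> S \<Longrightarrow> u \<in> C \<Longrightarrow> u \<notin> Z
   \<Longrightarrow> (A, C - {u}) \<in> IX S Y Z (j - 1) (j - 1) \<and> u \<in> Y"
  using jj finY[of C] unfolding IX_def Dc_def by auto

lemma tr2i: "(A, C) \<in> IX S Y Z (j - 1) (j - 1) \<Longrightarrow> u \<in> Y \<Longrightarrow> u \<notin> C \<Longrightarrow> u \<notin> S
   \<Longrightarrow> (A, insert u C) \<in> IX S Y Z (j - 1) j \<and> u \<notin> Z"
  using jj finY[of C] unfolding IX_def Dc_def by auto

lemma tr3: "(A, C) \<in> IX S Y Z j j \<Longrightarrow> u \<in> A \<Longrightarrow> u \<in> C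
   \<Longrightarrow> (A - {u}, C - {u}) \<in> IX S Y Z (j - 1) (j - 1) \<and> u \<in> Y \<and> u \<in> S"
  using jj finY[of C] finS[of A] unfolding IX_def Dc_def by auto

lemma tr3i: "(A, C) \<in> IX S Y Z (j - 1) (j - 1) \<Longrightarrow> u \<in> Y \<Longrightarrow> u \<notin> C \<Longrightarrow> u \<in> S
   \<Longrightarrow> (insert u A, insert u C) \<in> IX S Y Z j j \<and> u \<notin> A"
proof -
  assume h: "(A, C) \<in> IX S Y Z (j - 1) (j - 1)" "u \<in> Y" "u \<notin> C" "u \<in> S"
  then have "u \<notin> A" unfolding IX_def Dc_def by auto
  then show ?thesis using h jj finY[of C] finS[of A] unfolding IX_def Dc_def by auto
qed


lemma cK_eq: "cK ((A, C), u) = ((-1) ^ (cfe S Y Z A C + ninv ((S - A) \<union> C - {u}) {u}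
     + ninv {u} (A \<union> (Y - C) \<union> Z)) :: 'k::field)"
  unfolding cK_def cf_def pos_def wsign_ninv by (simp add: power_add)

lemma s3: "lc K1 (cK :: _ \<Rightarrow> 'k::field_char_0) fK p
   = (-1) ^ j * lc J1 (\<lambda>y. cf S Y Z (fst y)) (\<lambda>y. pos S Y Z (fst y)) p"
proof -
  have "lc K1 (cK :: _ \<Rightarrow> 'k) fK = lc J1 (\<lambda>y. (-1) ^ j * cf S Y Z (fst y)) (\<lambda>y. pos S Y Z (fst y))"
  proof (rule lc_reindex[where h="\<lambda>((A, C), u). ((insert u A, C), u)"])
    show "bij_betw (\<lambda>((A, C), u). ((insert u A, C), u)) K1 J1"
    proof (rule bij_betw_byWitness[where f'="\<lambda>((A, C), u). ((A - {u}, C), u)"])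
      show "\<forall>a\<in>K1. (\<lambda>((A, C), u). ((A - {u}, C), u)) ((\<lambda>((A, C), u). ((insert u A, C), u)) a) = a"
        by (clarsimp simp: mem_K1)
      show "\<forall>a\<in>J1. (\<lambda>((A, C), u). ((insert u A, C), u)) ((\<lambda>((A, C), u). ((A - {u}, C), u)) a) = a"
        by (clarsimp simp: mem_J1 insert_absorb)
      show "(\<lambda>((A, C), u). ((insert u A, C), u)) ` K1 \<subseteq> J1"
        by (auto simp: mem_K1 mem_J1 intro: tr1[simplified])
      show "(\<lambda>((A, C), u). ((A - {u}, C), u)) ` J1 \<subseteq> K1"
        by (auto simp: mem_K1 mem_J1 dest: tr1i[simplified])
    qed
  next
    fix y assume y: "y \<in> K1"
    obtain A C u where yy: "y = ((A, C), u)" by (metis prod.collapse)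
    have m: "(A, C) \<in> IX S Y Z (j - 1) j" "u \<in> S" "u \<notin> A" "u \<notin> C" "u \<notin> Y" "u \<notin> Z"
      using y by (auto simp: yy mem_K1)
    have "A \<subseteq> S" "C \<subseteq> Y" "Dc S Y Z A C" "card C = j" using m(1) by (auto simp: IX_def)
    then have "even (cfe S Y Z A C + ninv ((S - A) \<union> C - {u}) {u} + ninv {u} (A \<union> (Y - C) \<union> Z))
     = even (j + cfe S Y Z (insert u A) C)" using SL1_par[OF fin] m by metis
    then have "(-1::'k) ^ (cfe S Y Z A C + ninv ((S - A) \<union> C - {u}) {u} + ninv {u} (A \<union> (Y - C) \<union> Z))
       = (-1) ^ (j + cfe S Y Z (insert u A) C)" by (rule pow_eqI)
    then show "cK y = ((-1) ^ j * cf S Y Z (fst ((\<lambda>((A, C), u). ((insert u A, C), u)) y)) :: 'k)"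
      unfolding yy cK_eq by (simp add: cf_def power_add)
  next
    fix y assume y: "y \<in> K1"
    obtain A C u where yy: "y = ((A, C), u)" by (metis prod.collapse)
    have m: "u \<in> S" "u \<notin> A" "u \<notin> C" using y by (auto simp: yy mem_K1)
    show "fK y = pos S Y Z (fst ((\<lambda>((A, C), u). ((insert u A, C), u)) y))"
      using m unfolding yy fK_def pos_def by auto
  qed
  then show ?thesis by (simp add: lc_scale)
qed


lemma s4: "lc K2 (cK :: _ \<Rightarrow> 'k::field_char_0) fK p
   = (-1) ^ (j - 1) * lc J2 (\<lambda>y. cf S Y Z (fst y)) (\<lambda>y. pos S Y Z (fst y)) p"
proof -
  have "lc K2 (cK :: _ \<Rightarrow> 'k) fK = lc J2 (\<lambda>y. (-1) ^ (j - 1) * cf S Y Z (fst y)) (\<lambda>y. pos S Y Z (fst y))"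
  proof (rule lc_reindex[where h="\<lambda>((A, C), u). ((A, C - {u}), u)"])
    show "bij_betw (\<lambda>((A, C), u). ((A, C - {u}), u)) K2 J2"
    proof (rule bij_betw_byWitness[where f'="\<lambda>((A, C), u). ((A, insert u C), u)"])
      show "\<forall>a\<in>K2. (\<lambda>((A, C), u). ((A, insert u C), u)) ((\<lambda>((A, C), u). ((A, C - {u}), u)) a) = a"
        by (clarsimp simp: mem_K2 insert_absorb)
      show "\<forall>a\<in>J2. (\<lambda>((A, C), u). ((A, C - {u}), u)) ((\<lambda>((A, C), u). ((A, insert u C), u)) a) = a"
        by (clarsimp simp: mem_J2)
      show "(\<lambda>((A, C), u). ((A, C - {u}), u)) ` K2 \<subseteq> J2"
        by (auto simp: mem_K2 mem_J2 dest: tr2[simplified])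
      show "(\<lambda>((A, C), u). ((A, insert u C), u)) ` J2 \<subseteq> K2"
        by (auto simp: mem_K2 mem_J2 dest: tr2i[simplified])
    qed
  next
    fix y assume y: "y \<in> K2"
    obtain A C u where yy: "y = ((A, C), u)" by (metis prod.collapse)
    have m: "(A, C) \<in> IX S Y Z (j - 1) j" "u \<notin> S" "u \<in> C" "u \<notin> Z"
      using y by (auto simp: yy mem_K2)
    have "A \<subseteq> S" "C \<subseteq> Y" "Dc S Y Z A C" "card A = j - 1" using m(1) by (auto simp: IX_def)
    moreover have "u \<notin> A" using m \<open>A \<subseteq> S\<close> by auto
    ultimately have "even (cfe S Y Z A C + ninv ((S - A) \<union> C - {u}) {u} + ninv {u} (A \<union> (Y - C) \<union> Z))
     = even ((j - 1) + cfe S Y Z A (C - {u}))" using SL2_par[OF fin] m by metis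
    then have "(-1::'k) ^ (cfe S Y Z A C + ninv ((S - A) \<union> C - {u}) {u} + ninv {u} (A \<union> (Y - C) \<union> Z))
       = (-1) ^ ((j - 1) + cfe S Y Z A (C - {u}))" by (rule pow_eqI)
    then show "cK y = ((-1) ^ (j - 1) * cf S Y Z (fst ((\<lambda>((A, C), u). ((A, C - {u}), u)) y)) :: 'k)"
      unfolding yy cK_eq by (simp add: cf_def power_add)
  next
    fix y assume y: "y \<in> K2"
    obtain A C u where yy: "y = ((A, C), u)" by (metis prod.collapse)
    have m: "u \<notin> S" "u \<in> C" "C \<subseteq> Y" using y by (auto simp: yy mem_K2 IX_def)
    show "fK y = pos S Y Z (fst ((\<lambda>((A, C), u). ((A, C - {u}), u)) y))"
      using m unfolding yy fK_def pos_def by auto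
  qed
  then show ?thesis by (simp add: lc_scale)
qed

lemma s5: "lc J1' (\<lambda>y. cf S Y Z (fst y) :: 'k::field_char_0) (\<lambda>y. pos S Y Z (fst y)) p
   = lc J2' (\<lambda>y. cf S Y Z (fst y)) (\<lambda>y. pos S Y Z (fst y)) p"
proof -
  have "lc J1' (\<lambda>y. cf S Y Z (fst y) :: 'k) (\<lambda>y. pos S Y Z (fst y)) = lc J2' (\<lambda>y. cf S Y Z (fst y)) (\<lambda>y. pos S Y Z (fst y))"
  proof (rule lc_reindex[where h="\<lambda>((A, C), u). ((A - {u}, C - {u}), u)"])
    show "bij_betw (\<lambda>((A, C), u). ((A - {u}, C - {u}), u)) J1' J2'"
    proof (rule bij_betw_byWitness[where f'="\<lambda>((A, C), u). ((insert u A, insert u C), u)"])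
      show "\<forall>a\<in>J1'. (\<lambda>((A, C), u). ((insert u A, insert u C), u)) ((\<lambda>((A, C), u). ((A - {u}, C - {u}), u)) a) = a"
        by (clarsimp simp: mem_J1' insert_absorb)
      show "\<forall>a\<in>J2'. (\<lambda>((A, C), u). ((A - {u}, C - {u}), u)) ((\<lambda>((A, C), u). ((insert u A, insert u C), u)) a) = a"
        by (auto simp: mem_J2' dest: tr3i[simplified])
      show "(\<lambda>((A, C), u). ((A - {u}, C - {u}), u)) ` J1' \<subseteq> J2'"
        by (auto simp: mem_J1' mem_J2' dest: tr3[simplified])
      show "(\<lambda>((A, C), u). ((insert u A, insert u C), u)) ` J2' \<subseteq> J1'"
        by (auto simp: mem_J1' mem_J2' dest: tr3i[simplified])
    qed
  next
    fix y assume y: "y \<in> J1'"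
    obtain A C u where yy: "y = ((A, C), u)" by (metis prod.collapse)
    have m: "(A, C) \<in> IX S Y Z j j" "u \<in> A" "u \<in> C" using y by (auto simp: yy mem_J1')
    have m2: "A \<subseteq> S" "C \<subseteq> Y" "Dc S Y Z A C" "card A = j" "card C = j" using m(1) by (auto simp: IX_def)
    have fA: "finite A" "finite C" using m2 finS finY by auto
    have "even (cfe S Y Z (insert u (A - {u})) (insert u (C - {u}))) = even (cfe S Y Z (A - {u}) (C - {u}))"
      by (rule SL3_par[OF fin]) (use m m2 fA in \<open>auto simp: Dc_def\<close>)
    moreover have "insert u (A - {u}) = A" "insert u (C - {u}) = C" using m by auto
    ultimately have "(-1::'k) ^ cfe S Y Z A C = (-1) ^ cfe S Y Z (A - {u}) (C - {u})"
      by (intro pow_eqI) simp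
    then show "cf S Y Z (fst y) = (cf S Y Z (fst ((\<lambda>((A, C), u). ((A - {u}, C - {u}), u)) y)) :: 'k)"
      unfolding yy by (simp add: cf_def)
  next
    fix y assume y: "y \<in> J1'"
    obtain A C u where yy: "y = ((A, C), u)" by (metis prod.collapse)
    have m: "(A, C) \<in> IX S Y Z j j" "u \<in> A" "u \<in> C" using y by (auto simp: yy mem_J1')
    have m2: "A \<subseteq> S" "C \<subseteq> Y" using m(1) by (auto simp: IX_def)
    show "pos S Y Z (fst y) = pos S Y Z (fst ((\<lambda>((A, C), u). ((A - {u}, C - {u}), u)) y))"
      using m m2 unfolding yy pos_def by auto
  qed
  then show ?thesis by simp
qed


lemma KK_finite: "finite KK"
  unfolding KK_def
proof (rule finite_SigmaI)
  show "finite (IX S Y Z (j - 1) j)" by (rule IX_finite[OF fin(1,2)])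
  fix x assume "x \<in> IX S Y Z (j - 1) j"
  then have "snd x \<subseteq> Y" by (auto simp: IX_def)
  then have "finite (snd x)" using finite_subset fin(2) by blast
  then have "finite (fst (pos S Y Z x))" by (simp add: pos_def fin)
  then show "finite {u \<in> fst (pos S Y Z x). u \<notin> snd (pos S Y Z x)}" by simp
qed

lemma Sg1_finite: "finite Sg1"
  unfolding Sg1_def
  by (rule finite_SigmaI[OF IX_finite[OF fin(1,2)]]) (auto simp: IX_def intro: finS)

lemma Sg2_finite: "finite Sg2"
  unfolding Sg2_def
  by (rule finite_SigmaI[OF IX_finite[OF fin(1,2)]]) (auto simp: fin)

lemma s6: "lc Sg1 (\<lambda>y. cf S Y Z (fst y) :: 'k::field_char_0) (\<lambda>y. pos S Y Z (fst y)) p = of_nat j * WW S Y Z j j p"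
proof -
  have "lc Sg1 (\<lambda>y. cf S Y Z (fst y) :: 'k) (\<lambda>y. pos S Y Z (fst y)) p
      = lc (IX S Y Z j j) (\<lambda>i. of_nat (card (fst i)) * cf S Y Z i) (pos S Y Z) p"
    unfolding Sg1_def by (rule lc_const_fiber[OF IX_finite[OF fin(1,2)]]) (auto simp: IX_def intro: finS)
  also have "\<dots> = lc (IX S Y Z j j) (\<lambda>i. of_nat j * cf S Y Z i) (pos S Y Z) p"
    by (rule arg_cong[where f="\<lambda>h. h p"], rule lc_cong) (auto simp: IX_def)
  finally show ?thesis by (simp add: WW_def lc_scale)
qed

lemma s7: "lc Sg2 (\<lambda>y. cf S Y Z (fst y) :: 'k::field_char_0) (\<lambda>y. pos S Y Z (fst y)) p
   = of_nat (k - j + 1) * WW S Y Z (j - 1) (j - 1) p"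
proof -
  have "lc Sg2 (\<lambda>y. cf S Y Z (fst y) :: 'k) (\<lambda>y. pos S Y Z (fst y)) p
      = lc (IX S Y Z (j - 1) (j - 1)) (\<lambda>i. of_nat (card (Y - snd i)) * cf S Y Z i) (pos S Y Z) p"
    unfolding Sg2_def by (rule lc_const_fiber[OF IX_finite[OF fin(1,2)]]) (auto simp: fin)
  also have "\<dots> = lc (IX S Y Z (j - 1) (j - 1)) (\<lambda>i. of_nat (k - j + 1) * cf S Y Z i) (pos S Y Z) p"
  proof (rule arg_cong[where f="\<lambda>h. h p"], rule lc_cong)
    fix i assume "i \<in> IX S Y Z (j - 1) (j - 1)"
    then have "snd i \<subseteq> Y" "card (snd i) = j - 1" by (auto simp: IX_def)
    then have "card (Y - snd i) = k - j + 1" using cards jj fin finY by (simp add: card_Diff_subset)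
    then show "(of_nat (card (Y - snd i)) * cf S Y Z i :: 'k) = of_nat (k - j + 1) * cf S Y Z i" by simp
  qed auto
  finally show ?thesis by (simp add: WW_def lc_scale)
qed

lemma P2: "theta1 n a b (WW S Y Z (j - 1) j :: _ \<Rightarrow> 'k::field_char_0) p
   = (-1) ^ j * (of_nat j * WW S Y Z j j p - of_nat (k - j + 1) * WW S Y Z (j - 1) (j - 1) p)"
proof -
  let ?c = "\<lambda>y. cf S Y Z (fst y) :: 'k"
  let ?f = "\<lambda>y. pos S Y Z (fst y)"
  have a1: "lc KK (cK :: _ \<Rightarrow> 'k) fK p = lc K1 cK fK p + lc K2 cK fK p"
    unfolding K1_def K2_def by (rule lc_split[OF KK_finite])
  have a2: "lc Sg1 ?c ?f p = lc J1 ?c ?f p + lc J1' ?c ?f p"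
    unfolding J1_def J1'_def by (rule lc_split[OF Sg1_finite])
  have a3: "lc Sg2 ?c ?f p = lc J2 ?c ?f p + lc J2' ?c ?f p"
    unfolding J2_def J2'_def by (rule lc_split[OF Sg2_finite])
  have sg: "(-1::'k) ^ (j - 1) = - ((-1) ^ j)"
    using jj by (cases j) auto
  show ?thesis
    unfolding theta_Psi_K a1 s3 s4 s6[symmetric] s7[symmetric] a2 a3 s5 sg
    by (simp add: algebra_simps)
qed

end




lemma theta1_sum: "finite I \<Longrightarrow> theta1 n a b (\<lambda>p. \<Sum>i\<in>I. g i p) PQ = (\<Sum>i\<in>I. theta1 n a b (g i) PQ)"
  unfolding theta1_def by (simp add: sum_distrib_right sum.swap[of _ I])

lemma theta1_scale: "theta1 n a b (\<lambda>p. c * g p) PQ = c * theta1 n a b g PQ"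
  unfolding theta1_def by (simp add: sum_distrib_left mult.assoc mult.left_commute)

lemma telesc:
  fixes g :: "nat \<Rightarrow> 'a::ab_group_add" and m :: nat
  shows "(\<Sum>j\<in>{1..m}. g (j - 1) - g j) = g 0 - g m"
proof (induction m)
  case (Suc m)
  have "{1..Suc m} = insert (Suc m) {1..m}" by auto
  then show ?case using Suc by simp
qed simp

definition psi :: "nat set \<Rightarrow> nat set \<Rightarrow> nat set \<Rightarrow> nat \<Rightarrow> nat set \<times> nat set \<Rightarrow> 'k::field_char_0" where
  "psi S Y Z k = (\<lambda>p. \<Sum>j\<in>{1..k}. ((-1) ^ (j - 1) / (of_nat j * of_nat (k choose j))) * WW S Y Z (j - 1) j p)"

lemma binom_rel: "1 \<le> j \<Longrightarrow> j \<le> k \<Longrightarrow> j * (k choose j) = (k - j + 1) * (k choose (j - 1))"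
proof -
  assume "1 \<le> j" "j \<le> k"
  then obtain i where j: "j = Suc i" by (cases j) auto
  have "Suc i * (k choose Suc i) = k * ((k - 1) choose i)" by (rule binomial_absorption)
  also have "\<dots> = (k - i) * (k choose i)" by (rule binomial_absorb_comp[symmetric])
  moreover have "k - j + 1 = k - i" using j \<open>j \<le> k\<close> by simp
  ultimately show ?thesis using j by simp
qed

lemma P3:
  fixes S Y Z :: "nat set" and n a b k :: nat
  assumes fin: "finite S" "finite Y" "finite Z"
    and sub: "S \<subseteq> {0..<n}" "Y \<subseteq> {0..<n}" "Z \<subseteq> {0..<n}"
    and cards: "card S = a" "card Y = k" "card Z = b - k" "k \<le> b"
  shows "theta1 n a b (psi S Y Z k :: _ \<Rightarrow> 'k::field_char_0) p = WW S Y Z 0 0 p - WW S Y Z k k p"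
proof -
  let ?t = "\<lambda>j. WW S Y Z j j p / (of_nat (k choose j) :: 'k)"
  have "theta1 n a b (psi S Y Z k :: _ \<Rightarrow> 'k) p
     = (\<Sum>j\<in>{1..k}. ((-1) ^ (j - 1) / (of_nat j * of_nat (k choose j))) * theta1 n a b (WW S Y Z (j - 1) j :: _ \<Rightarrow> 'k) p)"
    unfolding psi_def by (simp only: theta1_sum[OF finite_atLeastAtMost] theta1_scale)
  also have "\<dots> = (\<Sum>j\<in>{1..k}. ?t (j - 1) - ?t j)"
  proof (rule sum.cong[OF refl])
    fix j assume j: "j \<in> {1..k}"
    have th: "theta1 n a b (WW S Y Z (j - 1) j :: _ \<Rightarrow> 'k) p
      = (-1) ^ j * (of_nat j * WW S Y Z j j p - of_nat (k - j + 1) * WW S Y Z (j - 1) (j - 1) p)"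
      using j by (intro P2[OF fin sub cards]) auto
    have sg: "(-1::'k) ^ (j - 1) * (-1) ^ j = -1"
      using j by (cases j) auto
    have br: "(of_nat j * of_nat (k choose j) :: 'k) = of_nat (k - j + 1) * of_nat (k choose (j - 1))"
      using binom_rel[of j k] j by (metis atLeastAtMost_iff of_nat_mult)
    have nz1: "(of_nat (k choose j) :: 'k) \<noteq> 0" using j by auto
    have nz2: "(of_nat (k choose (j - 1)) :: 'k) \<noteq> 0" using j by auto
    have nz3: "(of_nat (k - j + 1) :: 'k) \<noteq> 0" by (simp del: of_nat_Suc)
    have nzj: "(of_nat j :: 'k) \<noteq> 0" using j by auto
    show "(-1) ^ (j - 1) / (of_nat j * of_nat (k choose j)) * theta1 n a b (WW S Y Z (j - 1) j :: _ \<Rightarrow> 'k) p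
        = ?t (j - 1) - ?t j"
      unfolding th
    proof -
      let ?A = "WW S Y Z j j p :: 'k" and ?B = "WW S Y Z (j - 1) (j - 1) p :: 'k"
      have "(-1) ^ (j - 1) / (of_nat j * of_nat (k choose j)) * ((-1) ^ j * (of_nat j * ?A - of_nat (k - j + 1) * ?B))
          = ((-1) ^ (j - 1) * (-1) ^ j) * (of_nat j * ?A - of_nat (k - j + 1) * ?B) / (of_nat j * of_nat (k choose j))"
        by (simp add: field_simps)
      also have "\<dots> = (of_nat (k - j + 1) * ?B - of_nat j * ?A) / (of_nat j * of_nat (k choose j))"
        unfolding sg by (simp add: field_simps)
      also have "\<dots> = of_nat (k - j + 1) * ?B / (of_nat j * of_nat (k choose j)) - of_nat j * ?A / (of_nat j * of_nat (k choose j))"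
        by (simp add: diff_divide_distrib)
      also have "\<dots> = ?B / of_nat (k choose (j - 1)) - ?A / of_nat (k choose j)"
      proof -
        have "of_nat (k - j + 1) * ?B / (of_nat j * of_nat (k choose j)) = ?B / of_nat (k choose (j - 1))"
          unfolding br by (rule mult_divide_mult_cancel_left[OF nz3])
        moreover have "of_nat j * ?A / (of_nat j * of_nat (k choose j)) = ?A / of_nat (k choose j)"
          using nzj nz1 by (simp add: field_simps)
        ultimately show ?thesis by simp
      qed
      finally show "(-1) ^ (j - 1) / (of_nat j * of_nat (k choose j)) * ((-1) ^ j * (of_nat j * ?A - of_nat (k - j + 1) * ?B))
          = ?t (j - 1) - ?t j" by simp
    qed
  qed
  also have "\<dots> = ?t 0 - ?t k" by (rule telesc)
  also have "\<dots> = WW S Y Z 0 0 p - WW S Y Z k k p" by simp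
  finally show ?thesis .
qed




lemma WW0:
  assumes "finite S" "finite Y"
  shows "WW S Y Z 0 0 PQ = (if fst PQ = S then wedge_b Y Z (snd PQ) else (0::'k::field))"
proof -
  have I: "IX S Y Z 0 0 = (if Y \<inter> Z = {} then {({}, {})} else {})"
    using assms by (auto simp: IX_def Dc_def card_0_eq finite_subset)
  have c: "cf S Y Z ({}, {}) = (wsign Y Z :: 'k)"
    by (simp add: cf_def cfe_def wsign_ninv)
  show ?thesis
    unfolding WW_def lc_def I using c
    by (cases PQ) (auto simp: pos_def wedge_b_def)
qed

lemma WWk:
  assumes fin: "finite S" "finite Y" and cards: "card S = a" "card Y = k"
  shows "WW S Y Z k k PQ = (beta_b a k S Y Z PQ :: 'k::field)"
proof -
  obtain P Q where PQ: "PQ = (P, Q)" by fastforce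
  let ?F = "\<lambda>A. if card A = k \<and> (S - A) \<inter> Y = {} \<and> A \<inter> Z = {} \<and> ((S - A) \<union> Y, A \<union> Z) = (P, Q)
      then wsign (S - A) A * wsign (S - A) Y * wsign A Z else (0::'k)"
  have I: "IX S Y Z k k = (\<lambda>A. (A, Y)) ` {A \<in> Pow S. card A = k \<and> (S - A) \<inter> Y = {} \<and> A \<inter> Z = {}}"
  proof (rule set_eqI, rule iffI)
    fix x assume x: "x \<in> IX S Y Z k k"
    obtain A C where xx: "x = (A, C)" by fastforce
    have "C \<subseteq> Y" "card C = k" using x by (auto simp: IX_def xx)
    then have "C = Y" using card_subset_eq fin cards by metis
    then show "x \<in> (\<lambda>A. (A, Y)) ` {A \<in> Pow S. card A = k \<and> (S - A) \<inter> Y = {} \<and> A \<inter> Z = {}}"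
      using x by (auto simp: IX_def Dc_def xx)
  qed (use cards in \<open>auto simp: IX_def Dc_def\<close>)
  have "WW S Y Z k k PQ = (\<Sum>A\<in>{A \<in> Pow S. card A = k \<and> (S - A) \<inter> Y = {} \<and> A \<inter> Z = {}}.
        if pos S Y Z (A, Y) = PQ then cf S Y Z (A, Y) else 0)"
    unfolding WW_def lc_def I by (subst sum.reindex) (auto simp: inj_on_def)
  also have "\<dots> = (\<Sum>A\<in>Pow S. ?F A)"
    by (rule sum.mono_neutral_cong_left) (auto simp: fin pos_def PQ cf_def cfe_def wsign_ninv power_add)
  also have "\<dots> = beta_b a k S Y Z PQ"
  proof -
    let ?G = "\<lambda>A'. if card A' = a - k \<and> card (S - A') = k then
        wsign A' (S - A') * wedge_b A' Y P * wedge_b (S - A') Z Q else (0::'k)"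
    have "beta_b a k S Y Z PQ = (\<Sum>A'\<in>Pow S. ?G A')"
      unfolding beta_b_def PQ split
    proof (rule sum.cong[OF refl])
      fix A' assume A': "A' \<in> Pow S"
      have "(\<Sum>B\<in>Pow S. comult_b (a - k) k S (A', B) * wedge_b A' Y P * wedge_b B Z Q)
          = (\<Sum>B\<in>Pow S. if B = S - A' then ?G A' else 0)"
        by (rule sum.cong[OF refl]) (use A' in \<open>auto simp: comult_b_def\<close>)
      also have "\<dots> = ?G A'" by (simp add: sum.delta' fin)
      finally show "(\<Sum>B\<in>Pow S. comult_b (a - k) k S (A', B) * wedge_b A' Y P * wedge_b B Z Q) = ?G A'" .
    qed
    also have "\<dots> = (\<Sum>A\<in>Pow S. ?G (S - A))"
      by (rule sum.reindex_bij_betw[symmetric], rule bij_betw_byWitness[where f'="\<lambda>A. S - A"]) auto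
    also have "\<dots> = (\<Sum>A\<in>Pow S. ?F A)"
    proof (rule sum.cong[OF refl])
      fix A assume A: "A \<in> Pow S"
      have fA: "finite A" using A fin finite_subset by auto
      have SA: "S - (S - A) = A" using A by auto
      have cSA: "card (S - A) = a - card A" using A fA cards by (simp add: card_Diff_subset)
      show "?G (S - A) = ?F A"
        unfolding SA using cSA by (auto simp: wedge_b_def)
    qed
    finally show ?thesis by simp
  qed
  finally show ?thesis .
qed




lemma lc_nz:
  assumes "lc I c f p \<noteq> 0" shows "\<exists>i\<in>I. f i = p"
proof (rule ccontr)
  assume "\<not> ?thesis"
  then have "lc I c f p = 0" unfolding lc_def by (intro sum.neutral) auto
  with assms show False by simp
qed

lemma sum_nz:
  assumes "(\<Sum>i\<in>I. g i) \<noteq> (0::'a::comm_monoid_add)" shows "\<exists>i\<in>I. g i \<noteq> 0"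
proof (rule ccontr)
  assume "\<not> ?thesis"
  then have "(\<Sum>i\<in>I. g i) = 0" by (intro sum.neutral) auto
  with assms show False by simp
qed

lemma ext_basisD: "S \<in> ext_basis n d \<Longrightarrow> finite S \<and> S \<subseteq> {0..<n} \<and> card S = d"
  unfolding ext_basis_def by (auto intro: finite_subset[OF _ finite_atLeastLessThan])

lemma theta_psi:
  assumes "S \<in> ext_basis n a" "Y \<in> ext_basis n k" "Z \<in> ext_basis n (b - k)" "k \<le> b"
  shows "theta1 n a b (psi S Y Z k :: _ \<Rightarrow> 'k::field_char_0) PQ = gamma_b a k S Y Z PQ"
proof -
  note S = ext_basisD[OF assms(1)] and Y = ext_basisD[OF assms(2)] and Z = ext_basisD[OF assms(3)]
  have "theta1 n a b (psi S Y Z k :: _ \<Rightarrow> 'k) PQ = WW S Y Z 0 0 PQ - WW S Y Z k k PQ"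
    by (rule P3) (use S Y Z assms(4) in simp_all)
  also have "\<dots> = gamma_b a k S Y Z PQ"
  proof -
    obtain P Q where PQ: "PQ = (P, Q)" by fastforce
    have w0: "WW S Y Z 0 0 PQ = (if fst PQ = S then wedge_b Y Z (snd PQ) else (0::'k))"
      by (rule WW0) (use S Y in simp_all)
    have wk: "WW S Y Z k k PQ = (beta_b a k S Y Z PQ :: 'k)"
      by (rule WWk) (use S Y in simp_all)
    show ?thesis unfolding w0 wk unfolding PQ gamma_b_def by simp
  qed
  finally show ?thesis .
qed

lemma psi_supp:
  assumes "S \<in> ext_basis n a" "Y \<in> ext_basis n k" "Z \<in> ext_basis n (b - k)" "k \<le> b"
    and "(psi S Y Z k (P, Q) :: 'k::field_char_0) \<noteq> 0"
  shows "P \<in> ext_basis n (a + 1) \<and> Q \<in> ext_basis n (b - 1)"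
proof -
  note S = ext_basisD[OF assms(1)] and Y = ext_basisD[OF assms(2)] and Z = ext_basisD[OF assms(3)]
  obtain j where j: "j \<in> {1..k}"
    and nz: "((-1) ^ (j - 1) / (of_nat j * of_nat (k choose j))) * (WW S Y Z (j - 1) j (P, Q) :: 'k) \<noteq> 0"
    using sum_nz[OF assms(5)[unfolded psi_def]] by blast
  have "(WW S Y Z (j - 1) j (P, Q) :: 'k) \<noteq> 0"
  proof
    assume "(WW S Y Z (j - 1) j (P, Q) :: 'k) = 0"
    with nz show False by simp
  qed
  then have "lc (IX S Y Z (j - 1) j) (cf S Y Z :: _ \<Rightarrow> 'k) (pos S Y Z) (P, Q) \<noteq> 0"
    unfolding WW_def .
  then obtain i where i: "i \<in> IX S Y Z (j - 1) j" "pos S Y Z i = (P, Q)"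
    by (auto dest!: lc_nz)
  have "pos S Y Z i \<in> ext_basis n (a + 1) \<times> ext_basis n (b - 1)"
    using S Y Z assms(4) j i(1)
    by (intro pos_mem[where S=S and Y=Y and Z=Z and n=n and a=a and b=b and k=k and j=j]) simp_all
  then show ?thesis using i by simp
qed

theorem lemma5p2:
  fixes n a b k :: nat
  assumes "0 < k" and "k \<le> b" and "b \<le> a"
  shows "(gamma n a b k :: (nat set \<times> nat set \<times> nat set \<Rightarrow> 'k::field_char_0) \<Rightarrow> _)
           ` tensor3 n a k (b - k)
         \<subseteq> theta1 n a b ` tensor2 n (a + 1) (b - 1)"
proof
  fix g assume "g \<in> (gamma n a b k :: (nat set \<times> nat set \<times> nat set \<Rightarrow> 'k) \<Rightarrow> _) ` tensor3 n a k (b - k)"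
  then obtain x where x: "x \<in> tensor3 n a k (b - k)" and g: "g = gamma n a b k x" by blast
  define pre where "pre = (\<lambda>UT. \<Sum>S\<in>ext_basis n a. \<Sum>Y\<in>ext_basis n k. \<Sum>Z\<in>ext_basis n (b - k).
      x (S, Y, Z) * (psi S Y Z k UT :: 'k))"
  have "theta1 n a b pre = g"
  proof
    fix PQ
    have "theta1 n a b pre PQ = (\<Sum>S\<in>ext_basis n a. \<Sum>Y\<in>ext_basis n k. \<Sum>Z\<in>ext_basis n (b - k).
      x (S, Y, Z) * theta1 n a b (psi S Y Z k) PQ)"
      unfolding pre_def by (simp only: theta1_sum[OF ext_basis_finite] theta1_scale)
    also have "\<dots> = g PQ"
      unfolding g gamma_def by (intro sum.cong refl) (simp add: theta_psi assms(2))
    finally show "theta1 n a b pre PQ = g PQ" .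
  qed
  moreover have "pre \<in> tensor2 n (a + 1) (b - 1)"
    unfolding tensor2_def
  proof (intro CollectI allI impI)
    fix P Q assume "pre (P, Q) \<noteq> 0"
    then have "(\<Sum>S\<in>ext_basis n a. \<Sum>Y\<in>ext_basis n k. \<Sum>Z\<in>ext_basis n (b - k).
      x (S, Y, Z) * (psi S Y Z k (P, Q) :: 'k)) \<noteq> 0" by (simp add: pre_def)
    then obtain S where S: "S \<in> ext_basis n a" and "(\<Sum>Y\<in>ext_basis n k. \<Sum>Z\<in>ext_basis n (b - k).
      x (S, Y, Z) * (psi S Y Z k (P, Q) :: 'k)) \<noteq> 0"
      using sum_nz by blast
    then obtain Y where Y: "Y \<in> ext_basis n k" and "(\<Sum>Z\<in>ext_basis n (b - k).
      x (S, Y, Z) * (psi S Y Z k (P, Q) :: 'k)) \<noteq> 0"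
      using sum_nz by blast
    then obtain Z where Z: "Z \<in> ext_basis n (b - k)" and "x (S, Y, Z) * (psi S Y Z k (P, Q) :: 'k) \<noteq> 0"
      using sum_nz by blast
    with S Y have "S \<in> ext_basis n a" "Y \<in> ext_basis n k" "Z \<in> ext_basis n (b - k)"
      "x (S, Y, Z) * psi S Y Z k (P, Q) \<noteq> 0" by auto
    then show "P \<in> ext_basis n (a + 1) \<and> Q \<in> ext_basis n (b - 1)"
      by (intro psi_supp[OF _ _ _ assms(2)]) auto
  qed
  ultimately show "g \<in> theta1 n a b ` tensor2 n (a + 1) (b - 1)" by (intro image_eqI[of g _ pre]) auto
qed


end
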